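(* Suppose the strict partition $\lambda$ is shifted-balanced of Type (1) or Type (2). Then there exist integers $r_{ij}$, $[i,j]\in P^{\mathrm{shift}}_\lambda$, such that: (a) for every box $[i,j]\in P^{\mathrm{shift}}_\lambda$ with $i\ne j$: $\sum_{[i',j]\in P^{\mathrm{shift}}_\lambda}r_{i',j}=2$ and $\sum_{[i,j']\in P^{\mathrm{shift}}_\lambda}r_{i,j'}=2$; (b) for every box $[i,i]\in P^{\mathrm{shift}}_\lambda$: $\sum_{i'\le i,\ j'\le i}r_{i',j'}+\sum_{i'\ge i,\ j'\ge i}r_{i',j'}=4$ (sums over boxes $[i',j']\in P^{\mathrm{shift}}_\lambda$); (c) for every outward corner $c\in C^{\mathrm{shift}}(\lambda)$: $\sum_{[i,j]\in P^{\mathrm{shift}}_\lambda,\ c\in C^{\mathrm{shift}}_{ij}(\lambda)}r_{ij}=0$.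
   Context: $\delta_n=(n,n-1,\ldots,1)$, $b^a=(b,\ldots,b)$ ($a$ parts), partition sums are componentwise. A partition $\nu$ is balanced as a straight shape with height and width $k$ if $\ell(\nu)=\nu_1=k$ (or $\nu=\varnothing$ when $k=0$) and for every $1\le i\le k-1$ with $\nu_i>\nu_{i+1}$, $i+\nu_{i+1}=k$. A strict partition $\lambda$ is shifted-balanced of Type (1) if $\lambda=\delta_n+\nu$ and of Type (2) if $\lambda=\delta_n+\nu+(n-1-k)^n$, for some $0\le k<n$ and $\nu$ balanced with height and width $k$. $P^{\mathrm{shift}}_\lambda$ is the set of boxes $[i,j]$ with $1\le i\le\ell(\lambda)$, $i\le j\le i+\lambda_i-1$. $C^{\mathrm{shift}}(\lambda)$ is the set of corners $c_t$ for $1\le t\le\ell(\lambda)-1$ with $\lambda_t-\lambda_{t+1}\ge2$, where $c_t$ occurs at the lattice point $(t,t+\lambda_{t+1})$ (box $[i,j]$ having southeast corner $(i,j)$); $C^{\mathrm{shift}}_{ij}(\lambda)$ consists of those $c_t$ with $t\ge i$ and $t+\lambda_{t+1}\ge j$. *)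

theory Defs
  imports Main
begin

text \<open>Partitions are lists of parts in weakly decreasing order; part i (1-based)
  is part xs i. Missing parts are 0.\<close>

definition part :: "nat list \<Rightarrow> nat \<Rightarrow> nat" where
  "part xs i = (if 1 \<le> i \<and> i \<le> length xs then xs ! (i - 1) else 0)"

definition is_partition :: "nat list \<Rightarrow> bool" where
  "is_partition xs \<longleftrightarrow> sorted_wrt (\<ge>) xs \<and> (\<forall>x\<in>set xs. 0 < x)"

definition is_strict_partition :: "nat list \<Rightarrow> bool" where
  "is_strict_partition xs \<longleftrightarrow> sorted_wrt (>) xs \<and> (\<forall>x\<in>set xs. 0 < x)"

definition psum :: "nat list \<Rightarrow> nat list \<Rightarrow> nat list" where
  "psum a b = map (\<lambda>i. part a i + part b i) [1..<max (length a) (length b) + 1]"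

definition delta :: "nat \<Rightarrow> nat list" where
  "delta n = map (\<lambda>i. n - i) [0..<n]"

text \<open>b^a = (b,...,b) with a parts.\<close>
definition rect :: "nat \<Rightarrow> nat \<Rightarrow> nat list" where
  "rect b a = replicate a b"

definition balanced :: "nat list \<Rightarrow> nat \<Rightarrow> bool" where
  "balanced \<nu> k \<longleftrightarrow> is_partition \<nu> \<and>
     (if k = 0 then \<nu> = [] else
       length \<nu> = k \<and> part \<nu> 1 = k \<and>
       (\<forall>i. 1 \<le> i \<and> i \<le> k - 1 \<and> part \<nu> i > part \<nu> (i + 1) \<longrightarrow> i + part \<nu> (i + 1) = k))"

definition shifted_balanced_1 :: "nat list \<Rightarrow> bool" where
  "shifted_balanced_1 lam \<longleftrightarrow> (\<exists>n k \<nu>. k < n \<and> balanced \<nu> k \<and> lam = psum (delta n) \<nu>)"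

definition shifted_balanced_2 :: "nat list \<Rightarrow> bool" where
  "shifted_balanced_2 lam \<longleftrightarrow> (\<exists>n k \<nu>. k < n \<and> balanced \<nu> k \<and>
      lam = psum (psum (delta n) \<nu>) (rect (n - 1 - k) n))"

definition shifted_boxes :: "nat list \<Rightarrow> (nat \<times> nat) set" where
  "shifted_boxes lam = {(i, j). 1 \<le> i \<and> i \<le> length lam \<and> i \<le> j \<and> j + 1 \<le> i + part lam i}"

definition corner_indices :: "nat list \<Rightarrow> nat set" where
  "corner_indices lam = {t. 1 \<le> t \<and> t + 1 \<le> length lam \<and> part lam t \<ge> part lam (t + 1) + 2}"

definition corner_point :: "nat list \<Rightarrow> nat \<Rightarrow> nat \<times> nat" where
  "corner_point lam t = (t, t + part lam (t + 1))"

definition shifted_corners :: "nat list \<Rightarrow> (nat \<times> nat) set" where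
  "shifted_corners lam = corner_point lam ` corner_indices lam"

definition shifted_corners_ij :: "nat list \<Rightarrow> nat \<Rightarrow> nat \<Rightarrow> (nat \<times> nat) set" where
  "shifted_corners_ij lam i j = {c \<in> shifted_corners lam. fst c \<ge> i \<and> snd c \<ge> j}"

end

theory Submission imports Defs begin

lemma part_ge: "i > length xs \<Longrightarrow> part xs i = 0" by (simp add: part_def)
lemma part_zero[simp]: "part xs 0 = 0" by (simp add: part_def)

lemma length_psum[simp]: "length (psum a b) = max (length a) (length b)"
  unfolding psum_def by (simp only: length_map length_upt)

lemma part_psum: "part (psum a b) i = part a i + part b i"
proof (cases "1 \<le> i \<and> i \<le> max (length a) (length b)")
  case True
  have e: "[1..<max (length a) (length b) + 1] ! (i - 1) = i"
    using True by (subst nth_upt) auto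
  have "part (psum a b) i = psum a b ! (i - 1)" using True by (simp add: part_def)
  also have "\<dots> = part a ([1..<max (length a) (length b) + 1] ! (i - 1)) + part b ([1..<max (length a) (length b) + 1] ! (i - 1))"
    using True unfolding psum_def by (subst nth_map) auto
  also have "\<dots> = part a i + part b i" by (simp only: e)
  finally show ?thesis .
next
  case False
  then have "i = 0 \<or> (i > length a \<and> i > length b)" by auto
  then have "part (psum a b) i = 0" "part a i = 0" "part b i = 0"
    by (auto simp: part_def)
  then show ?thesis by simp
qed

lemma length_delta[simp]: "length (delta n) = n" by (simp add: delta_def)
lemma part_delta: "part (delta n) i = (if 1 \<le> i \<and> i \<le> n then n + 1 - i else 0)"
  by (auto simp: part_def delta_def)
lemma length_rect[simp]: "length (rect b a) = a" by (simp add: rect_def)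
lemma part_rect: "part (rect b a) i = (if 1 \<le> i \<and> i \<le> a then b else 0)"
  by (auto simp: part_def rect_def)

lemma balanced_facts:
  assumes "balanced \<nu> k"
  shows "length \<nu> = k" "part \<nu> 1 = k" "\<And>i. i > k \<Longrightarrow> part \<nu> i = 0"
    "\<And>i. 1 \<le> i \<Longrightarrow> i \<le> k \<Longrightarrow> part \<nu> i > 0"
    "\<And>i. 1 \<le> i \<Longrightarrow> part \<nu> (i+1) \<le> part \<nu> i"
    "\<And>i. 1 \<le> i \<Longrightarrow> i \<le> k - 1 \<Longrightarrow> part \<nu> i > part \<nu> (i + 1) \<Longrightarrow> i + part \<nu> (i + 1) = k"
proof -
  have P: "sorted_wrt (\<ge>) \<nu>" "\<forall>x\<in>set \<nu>. 0 < x" using assms by (auto simp: balanced_def is_partition_def)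
  show L: "length \<nu> = k" using assms by (auto simp: balanced_def split: if_splits)
  show "part \<nu> 1 = k" using assms by (auto simp: balanced_def part_def split: if_splits)
  show "\<And>i. i > k \<Longrightarrow> part \<nu> i = 0" using L by (simp add: part_def)
  show "\<And>i. 1 \<le> i \<Longrightarrow> i \<le> k \<Longrightarrow> part \<nu> i > 0"
  proof -
    fix i :: nat assume i: "1 \<le> i" "i \<le> k"
    have "\<nu> ! (i - 1) \<in> set \<nu>" by (rule nth_mem) (use i L in simp)
    then show "part \<nu> i > 0" using P(2) i L by (simp add: part_def)
  qed
  show "\<And>i. 1 \<le> i \<Longrightarrow> part \<nu> (i+1) \<le> part \<nu> i"
  proof -
    fix i :: nat assume i: "1 \<le> i"
    show "part \<nu> (i+1) \<le> part \<nu> i"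
    proof (cases "i + 1 \<le> length \<nu>")
      case True
      then have "\<nu> ! i \<le> \<nu> ! (i - 1)" using P(1) i
        using sorted_wrt_nth_less[OF P(1), of "i - 1" i] by simp
      then show ?thesis using True i by (simp add: part_def)
    next
      case False
      then show ?thesis by (simp add: part_def)
    qed
  qed
  show "\<And>i. 1 \<le> i \<Longrightarrow> i \<le> k - 1 \<Longrightarrow> part \<nu> i > part \<nu> (i + 1) \<Longrightarrow> i + part \<nu> (i + 1) = k"
    using assms by (auto simp: balanced_def split: if_splits)
qed

definition KK :: "nat list \<Rightarrow> int" where "KK lam = int (part lam 1) - int (length lam)"
definition cc :: "nat list \<Rightarrow> int" where "cc lam = 3 - int (length lam) - KK lam"
definition mm :: "nat list \<Rightarrow> int" where "mm lam = int (length lam) - 1 - KK lam"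
definition rr :: "nat list \<Rightarrow> nat \<times> nat \<Rightarrow> int" where
  "rr lam b = (if b = (1,1) then cc lam else 0) + (if b = (1, length lam) then mm lam else 0)
     + (if fst b = snd b \<and> 2 \<le> fst b \<and> fst b \<le> length lam then 2 else 0)
     - (if b = (length lam, length lam) then mm lam else 0)
     + (if fst b = 1 \<and> length lam < snd b \<and> snd b \<le> part lam 1 then 2 else 0)"

lemma sum_ind: "finite S \<Longrightarrow> (\<Sum>b\<in>S. if Q b then (a::int) else 0) = a * int (card {b\<in>S. Q b})"
proof -
  assume "finite S"
  moreover have "S \<inter> Collect Q = {b\<in>S. Q b}" by auto
  ultimately show ?thesis by (simp add: sum.If_cases)
qed

lemma sum_delta_eq: "finite S \<Longrightarrow> (\<Sum>b\<in>S. if b = x then (a::int) else 0) = a * (if x \<in> S then 1 else 0)"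
  by (simp add: sum.delta)

lemma sum_rr:
  assumes "finite S"
  shows "sum (rr lam) S =
    cc lam * (if (1,1) \<in> S then 1 else 0) + mm lam * (if (1, length lam) \<in> S then 1 else 0)
    + 2 * int (card {d. 2 \<le> d \<and> d \<le> length lam \<and> (d,d) \<in> S})
    - mm lam * (if (length lam, length lam) \<in> S then 1 else 0)
    + 2 * int (card {j. length lam < j \<and> j \<le> part lam 1 \<and> (1,j) \<in> S})"
proof -
  let ?L = "length lam" and ?P = "part lam 1"
  have c1: "card {b\<in>S. fst b = snd b \<and> 2 \<le> fst b \<and> fst b \<le> ?L} = card {d. 2 \<le> d \<and> d \<le> ?L \<and> (d,d) \<in> S}"
  proof -
    have "{b\<in>S. fst b = snd b \<and> 2 \<le> fst b \<and> fst b \<le> ?L} = (\<lambda>d. (d,d)) ` {d. 2 \<le> d \<and> d \<le> ?L \<and> (d,d) \<in> S}"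
      by (auto simp: image_def)
    moreover have "inj (\<lambda>d::nat. (d,d))" by (auto simp: inj_def)
    ultimately show ?thesis by (simp add: card_image inj_on_def)
  qed
  have c2: "card {b\<in>S. fst b = 1 \<and> ?L < snd b \<and> snd b \<le> ?P} = card {j. ?L < j \<and> j \<le> ?P \<and> (1,j) \<in> S}"
  proof -
    have "{b\<in>S. fst b = 1 \<and> ?L < snd b \<and> snd b \<le> ?P} = (\<lambda>j. (1,j)) ` {j. ?L < j \<and> j \<le> ?P \<and> (1,j) \<in> S}"
      by (auto simp: image_def)
    then show ?thesis by (simp add: card_image inj_on_def)
  qed
  have "sum (rr lam) S = (\<Sum>b\<in>S. if b = (1,1) then cc lam else 0) + (\<Sum>b\<in>S. if b = (1, ?L) then mm lam else 0)
     + (\<Sum>b\<in>S. if fst b = snd b \<and> 2 \<le> fst b \<and> fst b \<le> ?L then 2 else 0)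
     - (\<Sum>b\<in>S. if b = (?L, ?L) then mm lam else 0)
     + (\<Sum>b\<in>S. if fst b = 1 \<and> ?L < snd b \<and> snd b \<le> ?P then 2 else 0)"
    unfolding rr_def by (simp add: sum.distrib sum_subtractf)
  also have "\<dots> = cc lam * (if (1,1) \<in> S then 1 else 0) + mm lam * (if (1, ?L) \<in> S then 1 else 0)
    + 2 * int (card {b\<in>S. fst b = snd b \<and> 2 \<le> fst b \<and> fst b \<le> ?L})
    - mm lam * (if (?L, ?L) \<in> S then 1 else 0)
    + 2 * int (card {b\<in>S. fst b = 1 \<and> ?L < snd b \<and> snd b \<le> ?P})"
    using assms by (simp only: sum_delta_eq sum_ind[of S "\<lambda>b. fst b = snd b \<and> 2 \<le> fst b \<and> fst b \<le> ?L"]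
        sum_ind[of S "\<lambda>b. fst b = 1 \<and> ?L < snd b \<and> snd b \<le> ?P"])
  finally show ?thesis by (simp only: c1 c2)
qed

context
  fixes lam :: "nat list"
  assumes L1: "1 \<le> length lam" and SP: "is_strict_partition lam"
    and F4: "2 \<le> part lam (length lam) \<Longrightarrow> part lam 1 = 2 * length lam - 1"
    and F5: "\<And>t. 1 \<le> t \<Longrightarrow> t + 1 \<le> length lam \<Longrightarrow> part lam (t+1) + 2 \<le> part lam t
               \<Longrightarrow> part lam (t+1) + 2 * t = part lam 1"
begin

lemma stepL: "1 \<le> j \<Longrightarrow> j + 1 \<le> length lam \<Longrightarrow> part lam (j+1) < part lam j"
proof -
  assume j: "1 \<le> j" "j + 1 \<le> length lam"
  have "sorted_wrt (>) lam" using SP by (simp add: is_strict_partition_def)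
  from sorted_wrt_nth_less[OF this, of "j - 1" j] j have "lam ! j < lam ! (j - 1)" by simp
  then show ?thesis using j by (simp add: part_def)
qed

lemma SD:
  assumes "1 \<le> i" "i \<le> j" "j \<le> length lam"
  shows "part lam j + (j - i) \<le> part lam i"
  using assms(2,3)
proof (induction j rule: dec_induct)
  case base then show ?case by simp
next
  case (step n)
  have "part lam (n+1) < part lam n" using stepL[of n] step assms(1) by simp
  moreover have "part lam n + (n - i) \<le> part lam i" using step by simp
  ultimately show ?case using step by simp
qed

lemma PL: "1 \<le> part lam (length lam)"
proof -
  have "lam ! (length lam - 1) \<in> set lam" using L1 by (intro nth_mem) simp
  then have "0 < lam ! (length lam - 1)" using SP by (auto simp: is_strict_partition_def)
  then show ?thesis using L1 by (simp add: part_def)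
qed

lemma pos_ge: "1 \<le> x \<Longrightarrow> x \<le> length lam \<Longrightarrow> length lam - x + 1 \<le> part lam x"
  using SD[of x "length lam"] PL by simp

lemma le_P1: "1 \<le> x \<Longrightarrow> x \<le> length lam \<Longrightarrow> part lam x + (x - 1) \<le> part lam 1"
  using SD[of 1 x] by simp

lemma box_iff: "(x,y) \<in> shifted_boxes lam \<longleftrightarrow> 1 \<le> x \<and> x \<le> length lam \<and> x \<le> y \<and> y + 1 \<le> x + part lam x"
  by (simp add: shifted_boxes_def)

lemma diag_in: "(d,d) \<in> shifted_boxes lam \<longleftrightarrow> 1 \<le> d \<and> d \<le> length lam"
  using pos_ge[of d] by (auto simp: box_iff)

lemma row1_in: "(1,j) \<in> shifted_boxes lam \<longleftrightarrow> 1 \<le> j \<and> j \<le> part lam 1"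
  using L1 by (auto simp: box_iff)

lemma row1_in': "(Suc 0,j) \<in> shifted_boxes lam \<longleftrightarrow> 1 \<le> j \<and> j \<le> part lam (Suc 0)"
  using row1_in by simp

lemma finB: "finite (shifted_boxes lam)"
proof -
  have "shifted_boxes lam \<subseteq> {1..length lam} \<times> {1..part lam 1}"
  proof
    fix b assume "b \<in> shifted_boxes lam"
    then obtain x y where b: "b = (x,y)" "1 \<le> x" "x \<le> length lam" "x \<le> y" "y + 1 \<le> x + part lam x"
      by (cases b) (auto simp: box_iff)
    then show "b \<in> {1..length lam} \<times> {1..part lam 1}" using le_P1[of x] by auto
  qed
  then show ?thesis by (rule finite_subset) simp
qed

lemma P1_ge: "length lam \<le> part lam 1"
  using pos_ge[of 1] L1 by simp


lemma col_cond:
  assumes b: "(i,j) \<in> shifted_boxes lam" and ne: "i \<noteq> j"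
  shows "(\<Sum>i' \<in> {i'. (i', j) \<in> shifted_boxes lam}. rr lam (i', j)) = 2"
proof -
  let ?B = "shifted_boxes lam" and ?L = "length lam" and ?P = "part lam 1"
  let ?S = "{b\<in>?B. snd b = j}"
  have i: "1 \<le> i" "i \<le> ?L" "i < j" "j + 1 \<le> i + part lam i" using b ne by (auto simp: box_iff)
  have jP: "j \<le> ?P" using le_P1[of i] i by simp
  have img: "?S = (\<lambda>i'. (i',j)) ` {i'. (i', j) \<in> ?B}" by auto
  have "(\<Sum>i' \<in> {i'. (i', j) \<in> ?B}. rr lam (i', j)) = sum (rr lam) ?S"
    unfolding img by (subst sum.reindex) (auto simp: inj_on_def)
  also have "\<dots> = cc lam * (if (1,1) \<in> ?S then 1 else 0) + mm lam * (if (1, ?L) \<in> ?S then 1 else 0)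
    + 2 * int (card {d. 2 \<le> d \<and> d \<le> ?L \<and> (d,d) \<in> ?S})
    - mm lam * (if (?L, ?L) \<in> ?S then 1 else 0)
    + 2 * int (card {j'. ?L < j' \<and> j' \<le> ?P \<and> (1,j') \<in> ?S})"
    by (rule sum_rr) (use finB in auto)
  also have "\<dots> = 2"
  proof -
    have a1: "(1,1) \<notin> ?S" using i by auto
    have a2: "(1, ?L) \<in> ?S \<longleftrightarrow> j = ?L" using L1 P1_ge by (auto simp: row1_in row1_in')
    have a3: "(?L, ?L) \<in> ?S \<longleftrightarrow> j = ?L" using L1 by (auto simp: diag_in)
    have a4: "{d. 2 \<le> d \<and> d \<le> ?L \<and> (d,d) \<in> ?S} = (if j \<le> ?L then {j} else {})"
      using i by (auto simp: diag_in)
    have a5: "{j'. ?L < j' \<and> j' \<le> ?P \<and> (1,j') \<in> ?S} = (if ?L < j then {j} else {})"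
      using i jP by (auto simp: row1_in row1_in')
    show ?thesis
      using a1 a2 a3 a4 a5 by (cases "j < ?L"; cases "j = ?L") auto
  qed
  finally show ?thesis .
qed


lemma row_cond:
  assumes b: "(i,j) \<in> shifted_boxes lam" and ne: "i \<noteq> j"
  shows "(\<Sum>j' \<in> {j'. (i, j') \<in> shifted_boxes lam}. rr lam (i, j')) = 2"
proof -
  let ?B = "shifted_boxes lam" and ?L = "length lam" and ?P = "part lam 1"
  let ?S = "{b\<in>?B. fst b = i}"
  have i: "1 \<le> i" "i \<le> ?L" "i < j" "j + 1 \<le> i + part lam i" using b ne by (auto simp: box_iff)
  have pi: "2 \<le> part lam i" using i by simp
  have img: "?S = (\<lambda>j'. (i,j')) ` {j'. (i, j') \<in> ?B}" by auto
  have "(\<Sum>j' \<in> {j'. (i, j') \<in> ?B}. rr lam (i, j')) = sum (rr lam) ?S"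
    unfolding img by (subst sum.reindex) (auto simp: inj_on_def)
  also have "\<dots> = cc lam * (if (1,1) \<in> ?S then 1 else 0) + mm lam * (if (1, ?L) \<in> ?S then 1 else 0)
    + 2 * int (card {d. 2 \<le> d \<and> d \<le> ?L \<and> (d,d) \<in> ?S})
    - mm lam * (if (?L, ?L) \<in> ?S then 1 else 0)
    + 2 * int (card {j'. ?L < j' \<and> j' \<le> ?P \<and> (1,j') \<in> ?S})"
    by (rule sum_rr) (use finB in auto)
  also have "\<dots> = 2"
  proof -
    have a1: "(1,1) \<in> ?S \<longleftrightarrow> i = 1" using L1 by (auto simp: diag_in)
    have a2: "(1, ?L) \<in> ?S \<longleftrightarrow> i = 1" using L1 P1_ge by (auto simp: row1_in row1_in')
    have a3: "(?L, ?L) \<in> ?S \<longleftrightarrow> i = ?L" using L1 by (auto simp: diag_in)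
    have a4: "{d. 2 \<le> d \<and> d \<le> ?L \<and> (d,d) \<in> ?S} = (if 2 \<le> i then {i} else {})"
      using i by (auto simp: diag_in)
    have a5: "{j'. ?L < j' \<and> j' \<le> ?P \<and> (1,j') \<in> ?S} = (if i = 1 then {?L<..?P} else {})"
      using i L1 by (auto simp: row1_in row1_in')
    show ?thesis
    proof (cases "i = 1")
      case True
      have "?L \<noteq> 1"
      proof
        assume "?L = 1"
        then have "part lam ?L \<ge> 2" using pi True by simp
        then have "?P = 1" using F4 \<open>?L = 1\<close> by simp
        then show False using pi True by simp
      qed
      then show ?thesis using a1 a2 a3 a4 a5 True P1_ge
        by (simp add: cc_def mm_def KK_def of_nat_diff)
    next
      case False
      show ?thesis
      proof (cases "i = ?L")
        case True
        then have "?P = 2 * ?L - 1" using F4 pi by simp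
        then have "mm lam = 0" using L1 by (simp add: mm_def KK_def of_nat_diff)
        then show ?thesis using a1 a2 a3 a4 a5 True False i by simp
      next
        case False2: False
        then show ?thesis using a1 a2 a3 a4 a5 False i by simp
      qed
    qed
  qed
  finally show ?thesis .
qed


lemma diag_cond:
  assumes b: "(i,i) \<in> shifted_boxes lam"
  shows "(\<Sum>b \<in> {(i', j') \<in> shifted_boxes lam. i' \<le> i \<and> j' \<le> i}. rr lam b)
      + (\<Sum>b \<in> {(i', j') \<in> shifted_boxes lam. i' \<ge> i \<and> j' \<ge> i}. rr lam b) = 4"
proof -
  let ?B = "shifted_boxes lam" and ?L = "length lam" and ?P = "part lam 1"
  let ?U = "{b\<in>?B. fst b \<le> i \<and> snd b \<le> i}" and ?W = "{b\<in>?B. fst b \<ge> i \<and> snd b \<ge> i}"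
  have i: "1 \<le> i" "i \<le> ?L" using b by (auto simp: diag_in)
  have eU: "{(i', j') \<in> ?B. i' \<le> i \<and> j' \<le> i} = ?U" by auto
  have eW: "{(i', j') \<in> ?B. i' \<ge> i \<and> j' \<ge> i} = ?W" by auto
  have sU: "sum (rr lam) ?U = cc lam * (if (1,1) \<in> ?U then 1 else 0) + mm lam * (if (1, ?L) \<in> ?U then 1 else 0)
    + 2 * int (card {d. 2 \<le> d \<and> d \<le> ?L \<and> (d,d) \<in> ?U})
    - mm lam * (if (?L, ?L) \<in> ?U then 1 else 0)
    + 2 * int (card {j'. ?L < j' \<and> j' \<le> ?P \<and> (1,j') \<in> ?U})"
    by (rule sum_rr) (use finB in auto)
  have sW: "sum (rr lam) ?W = cc lam * (if (1,1) \<in> ?W then 1 else 0) + mm lam * (if (1, ?L) \<in> ?W then 1 else 0)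
    + 2 * int (card {d. 2 \<le> d \<and> d \<le> ?L \<and> (d,d) \<in> ?W})
    - mm lam * (if (?L, ?L) \<in> ?W then 1 else 0)
    + 2 * int (card {j'. ?L < j' \<and> j' \<le> ?P \<and> (1,j') \<in> ?W})"
    by (rule sum_rr) (use finB in auto)
  have u1: "(1,1) \<in> ?U" using i L1 by (auto simp: diag_in)
  have u2: "(1, ?L) \<in> ?U \<longleftrightarrow> i = ?L" using i L1 P1_ge by (auto simp: row1_in row1_in')
  have u3: "(?L, ?L) \<in> ?U \<longleftrightarrow> i = ?L" using i L1 by (auto simp: diag_in)
  have u4: "{d. 2 \<le> d \<and> d \<le> ?L \<and> (d,d) \<in> ?U} = {2..i}" using i by (auto simp: diag_in)
  have u5: "{j'. ?L < j' \<and> j' \<le> ?P \<and> (1,j') \<in> ?U} = {}" using i by auto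
  have w1: "(1,1) \<in> ?W \<longleftrightarrow> i = 1" using i L1 by (auto simp: diag_in)
  have w2: "(1, ?L) \<in> ?W \<longleftrightarrow> i = 1" using i L1 P1_ge by (auto simp: row1_in row1_in')
  have w3: "(?L, ?L) \<in> ?W" using i L1 by (auto simp: diag_in)
  have w4: "{d. 2 \<le> d \<and> d \<le> ?L \<and> (d,d) \<in> ?W} = {max 2 i..?L}" using i by (auto simp: diag_in)
  have w5: "{j'. ?L < j' \<and> j' \<le> ?P \<and> (1,j') \<in> ?W} = (if i = 1 then {?L<..?P} else {})"
    using i L1 by (auto simp: row1_in row1_in')
  have cu4: "card {d. 2 \<le> d \<and> d \<le> ?L \<and> (d,d) \<in> ?U} = i - 1" using u4 by simp
  have cu5: "card {j'. ?L < j' \<and> j' \<le> ?P \<and> (1,j') \<in> ?U} = 0" using u5 by simp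
  have cw4: "card {d. 2 \<le> d \<and> d \<le> ?L \<and> (d,d) \<in> ?W} = ?L + 1 - max 2 i" using w4 by simp
  have cw5: "card {j'. ?L < j' \<and> j' \<le> ?P \<and> (1,j') \<in> ?W} = (if i = 1 then ?P - ?L else 0)"
    using w5 by simp
  have "sum (rr lam) ?U + sum (rr lam) ?W =
    (cc lam * 1 + mm lam * (if i = ?L then 1 else 0) + 2 * int (i - 1) - mm lam * (if i = ?L then 1 else 0) + 2 * int 0)
    + (cc lam * (if i = 1 then 1 else 0) + mm lam * (if i = 1 then 1 else 0) + 2 * int (?L + 1 - max 2 i)
       - mm lam * 1 + 2 * int (if i = 1 then ?P - ?L else 0))"
    unfolding sU sW by (simp only: u1 u2 u3 w1 w2 w3 cu4 cu5 cw4 cw5 if_True)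
  also have "\<dots> = 4"
  proof (cases "i = 1")
    case True
    then show ?thesis using P1_ge L1
      by (simp add: cc_def mm_def KK_def of_nat_diff)
  next
    case False
    then show ?thesis using P1_ge L1 i
      by (simp add: cc_def mm_def KK_def of_nat_diff max_def)
  qed
  finally show ?thesis unfolding eU eW .
qed


lemma corner_cond:
  assumes c: "c \<in> shifted_corners lam"
  shows "(\<Sum>b \<in> {(i, j) \<in> shifted_boxes lam. c \<in> shifted_corners_ij lam i j}. rr lam b) = 0"
proof -
  let ?B = "shifted_boxes lam" and ?L = "length lam" and ?P = "part lam 1"
  obtain t where t: "c = (t, t + part lam (t+1))" "1 \<le> t" "t + 1 \<le> ?L" "part lam (t+1) + 2 \<le> part lam t"
    using c by (auto simp: shifted_corners_def corner_indices_def corner_point_def)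
  define J where "J = t + part lam (t+1)"
  have JL: "?L \<le> J" using pos_ge[of "t+1"] t unfolding J_def by simp
  have JP: "J \<le> ?P" using le_P1[of "t+1"] t unfolding J_def by simp
  have F: "part lam (t+1) + 2 * t = ?P" using F5 t by simp
  let ?S = "{b\<in>?B. fst b \<le> t \<and> snd b \<le> J}"
  have eS: "{(i, j) \<in> ?B. c \<in> shifted_corners_ij lam i j} = ?S"
    using c t unfolding shifted_corners_ij_def J_def by auto
  have sS: "sum (rr lam) ?S = cc lam * (if (1,1) \<in> ?S then 1 else 0) + mm lam * (if (1, ?L) \<in> ?S then 1 else 0)
    + 2 * int (card {d. 2 \<le> d \<and> d \<le> ?L \<and> (d,d) \<in> ?S})
    - mm lam * (if (?L, ?L) \<in> ?S then 1 else 0)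
    + 2 * int (card {j'. ?L < j' \<and> j' \<le> ?P \<and> (1,j') \<in> ?S})"
    by (rule sum_rr) (use finB in auto)
  have s1: "(1,1) \<in> ?S" using t L1 JL by (auto simp: diag_in)
  have s2: "(1, ?L) \<in> ?S" using t L1 P1_ge JL by (auto simp: row1_in row1_in')
  have s3: "(?L, ?L) \<notin> ?S" using t by auto
  have s4: "{d. 2 \<le> d \<and> d \<le> ?L \<and> (d,d) \<in> ?S} = {2..t}" using t JL by (auto simp: diag_in)
  have s5: "{j'. ?L < j' \<and> j' \<le> ?P \<and> (1,j') \<in> ?S} = {?L<..J}" using t JP L1 by (auto simp: row1_in row1_in')
  have cs4: "card {d. 2 \<le> d \<and> d \<le> ?L \<and> (d,d) \<in> ?S} = t - 1" using s4 by simp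
  have cs5: "card {j'. ?L < j' \<and> j' \<le> ?P \<and> (1,j') \<in> ?S} = J - ?L" using s5 by simp
  have "sum (rr lam) ?S = cc lam * 1 + mm lam * 1 + 2 * int (t - 1) - mm lam * 0 + 2 * int (J - ?L)"
    unfolding sS by (simp only: s1 s2 s3 cs4 cs5 if_True if_False)
  also have "\<dots> = 0" using t JL F unfolding J_def
    by (simp add: cc_def mm_def KK_def of_nat_diff)
  finally show ?thesis unfolding eS .
qed

lemma core:
  "\<exists>r :: nat \<times> nat \<Rightarrow> int.
    (\<forall>(i, j) \<in> shifted_boxes lam. i \<noteq> j \<longrightarrow>
        (\<Sum>i' \<in> {i'. (i', j) \<in> shifted_boxes lam}. r (i', j)) = 2 \<and>
        (\<Sum>j' \<in> {j'. (i, j') \<in> shifted_boxes lam}. r (i, j')) = 2) \<and>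
    (\<forall>i. (i, i) \<in> shifted_boxes lam \<longrightarrow>
        (\<Sum>b \<in> {(i', j') \<in> shifted_boxes lam. i' \<le> i \<and> j' \<le> i}. r b)
      + (\<Sum>b \<in> {(i', j') \<in> shifted_boxes lam. i' \<ge> i \<and> j' \<ge> i}. r b) = 4) \<and>
    (\<forall>c \<in> shifted_corners lam.
        (\<Sum>b \<in> {(i, j) \<in> shifted_boxes lam. c \<in> shifted_corners_ij lam i j}. r b) = 0)"
  apply (rule exI[of _ "rr lam"])
  using col_cond row_cond diag_cond corner_cond by blast

end

lemma shape_facts:
  assumes "k < n" "balanced \<nu> k" "e = 0 \<or> e = n - 1 - k" "length lam = n"
    "\<And>i. 1 \<le> i \<Longrightarrow> i \<le> n \<Longrightarrow> part lam i = n + 1 - i + part \<nu> i + e"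
  shows "1 \<le> length lam"
    "2 \<le> part lam (length lam) \<Longrightarrow> part lam 1 = 2 * length lam - 1"
    "\<And>t. 1 \<le> t \<Longrightarrow> t + 1 \<le> length lam \<Longrightarrow> part lam (t+1) + 2 \<le> part lam t
               \<Longrightarrow> part lam (t+1) + 2 * t = part lam 1"
proof -
  note B = balanced_facts[OF assms(2)]
  have p1: "part lam 1 = n + k + e" using assms(1,5) B(2) by simp
  show "1 \<le> length lam" using assms by simp
  show "2 \<le> part lam (length lam) \<Longrightarrow> part lam 1 = 2 * length lam - 1"
  proof -
    assume a: "2 \<le> part lam (length lam)"
    have "part lam n = 1 + e" using assms(1,4) assms(5)[of n] B(3)[of n] by simp
    then have "e = n - 1 - k" using a assms(3,4) by auto
    then show ?thesis using p1 assms(1,4) by simp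
  qed
  show "\<And>t. 1 \<le> t \<Longrightarrow> t + 1 \<le> length lam \<Longrightarrow> part lam (t+1) + 2 \<le> part lam t
               \<Longrightarrow> part lam (t+1) + 2 * t = part lam 1"
  proof -
    fix t assume t: "1 \<le> t" "t + 1 \<le> length lam" "part lam (t+1) + 2 \<le> part lam t"
    have pt: "part lam t = n + 1 - t + part \<nu> t + e" using t assms(4,5) by simp
    have pt1: "part lam (t+1) = n - t + part \<nu> (t+1) + e" using t assms(4) assms(5)[of "t+1"] by simp
    have lt: "part \<nu> (t+1) < part \<nu> t" using t pt pt1 assms(4) by simp
    have key: "t + part \<nu> (t+1) = k"
    proof (cases "t \<le> k - 1")
      case True
      then show ?thesis using B(6)[of t] t lt by simp
    next
      case False
      then have "t \<ge> k" by simp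
      moreover have "t \<le> k"
      proof (rule ccontr)
        assume "\<not> t \<le> k" then have "part \<nu> t = 0" using B(3) by simp
        then show False using lt by simp
      qed
      ultimately have "t = k" by simp
      then show ?thesis using B(3)[of "t+1"] by simp
    qed
    show "part lam (t+1) + 2 * t = part lam 1" using pt1 p1 key t assms(4) by simp
  qed
qed

lemma shape_exists:
  assumes "shifted_balanced_1 lam \<or> shifted_balanced_2 lam"
  shows "\<exists>n k \<nu> e. k < n \<and> balanced \<nu> k \<and> (e = 0 \<or> e = n - 1 - k) \<and> length lam = n \<and>
    (\<forall>i. 1 \<le> i \<longrightarrow> i \<le> n \<longrightarrow> part lam i = n + 1 - i + part \<nu> i + e)"
  using assms
proof
  assume "shifted_balanced_1 lam"
  then obtain n k \<nu> where h: "k < n" "balanced \<nu> k" "lam = psum (delta n) \<nu>"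
    by (auto simp: shifted_balanced_1_def)
  have "length \<nu> = k" using balanced_facts(1)[OF h(2)] .
  then have "length lam = n" using h by simp
  moreover have "\<forall>i. 1 \<le> i \<longrightarrow> i \<le> n \<longrightarrow> part lam i = n + 1 - i + part \<nu> i + 0"
    using h by (simp add: part_psum part_delta)
  ultimately show ?thesis using h by blast
next
  assume "shifted_balanced_2 lam"
  then obtain n k \<nu> where h: "k < n" "balanced \<nu> k" "lam = psum (psum (delta n) \<nu>) (rect (n - 1 - k) n)"
    by (auto simp: shifted_balanced_2_def)
  have "length \<nu> = k" using balanced_facts(1)[OF h(2)] .
  then have "length lam = n" using h by simp
  moreover have "\<forall>i. 1 \<le> i \<longrightarrow> i \<le> n \<longrightarrow> part lam i = n + 1 - i + part \<nu> i + (n - 1 - k)"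
    using h by (simp add: part_psum part_delta part_rect)
  ultimately show ?thesis using h by blast
qed

theorem lemma5p5:
  fixes lam :: "nat list"
  assumes "is_strict_partition lam"
    and "shifted_balanced_1 lam \<or> shifted_balanced_2 lam"
  shows "\<exists>r :: nat \<times> nat \<Rightarrow> int.
    (\<forall>(i, j) \<in> shifted_boxes lam. i \<noteq> j \<longrightarrow>
        (\<Sum>i' \<in> {i'. (i', j) \<in> shifted_boxes lam}. r (i', j)) = 2 \<and>
        (\<Sum>j' \<in> {j'. (i, j') \<in> shifted_boxes lam}. r (i, j')) = 2) \<and>
    (\<forall>i. (i, i) \<in> shifted_boxes lam \<longrightarrow>
        (\<Sum>b \<in> {(i', j') \<in> shifted_boxes lam. i' \<le> i \<and> j' \<le> i}. r b)
      + (\<Sum>b \<in> {(i', j') \<in> shifted_boxes lam. i' \<ge> i \<and> j' \<ge> i}. r b) = 4) \<and>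
    (\<forall>c \<in> shifted_corners lam.
        (\<Sum>b \<in> {(i, j) \<in> shifted_boxes lam. c \<in> shifted_corners_ij lam i j}. r b) = 0)"
proof -
  obtain n k \<nu> e where h: "k < n" "balanced \<nu> k" "e = 0 \<or> e = n - 1 - k" "length lam = n"
    "\<And>i. 1 \<le> i \<Longrightarrow> i \<le> n \<Longrightarrow> part lam i = n + 1 - i + part \<nu> i + e"
    using shape_exists[OF assms(2)] by blast
  note S = shape_facts[OF h]
  show ?thesis by (rule core[OF S(1) assms(1) S(2) S(3)])
qed

end
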